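(* Let $\Lambda$ be a row-finite $k$-graph with no sources, and let $\mu,\nu\in\Lambda$ with $s(\mu)=s(\nu)$. Then $\mu\sim\nu$ if and only if $\mathrm{MCE}(\mu\tau,\nu\tau)\ne\emptyset$ for every $\tau\in s(\mu)\Lambda$.
   Context: $k$-graph notation: countable category $\Lambda$, degree functor $d:\Lambda\to\mathbb N^k$ with unique factorisation, $\Lambda^n=d^{-1}(n)$, vertices $\Lambda^0$, range/source $r,s$, $v\Lambda^n=\{\lambda\in\Lambda^n:r(\lambda)=v\}$. Row-finite: every $v\Lambda^n$ is finite; no sources: every $v\Lambda^n$ is nonempty. $\mathrm{MCE}(\mu,\nu)=\{\lambda\in\Lambda^{d(\mu)\vee d(\nu)}:\lambda=\mu\alpha=\nu\beta\text{ for some }\alpha,\beta\}$. A filter is a nonempty $S\subseteq\Lambda$ with (F1) $\lambda\Lambda\cap S\ne\emptyset\Rightarrow\lambda\in S$ and (F2) $\mu,\nu\in S\Rightarrow\mathrm{MCE}(\mu,\nu)\cap S\ne\emptyset$; $r(S)$ denotes the unique vertex in $S$. An ultrafilter is a filter with $S\cap\Lambda^n\ne\emptyset$ for all $n\in\mathbb N^k$. For an ultrafilter $S$ and $\mu$ with $s(\mu)=r(S)$, $\ell_\mu(S)=\{\eta\in\Lambda:\eta\Lambda\cap\mu S\ne\emptyset\}$ (again an ultrafilter). For $\mu,\nu$ with $s(\mu)=s(\nu)$, $\mu\sim\nu$ means $\ell_\mu(S)=\ell_\nu(S)$ for every ultrafilter $S$ with $r(S)=s(\mu)$. *)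

theory Defs
  imports Main "HOL-Library.Countable_Set"
begin

text \<open>A k-graph is modelled as a category whose morphisms form a set Mor of
elements of an ambient type; objects are identified with identity morphisms
(the vertices). Degrees in N^k are modelled as functions nat => nat vanishing
at all i >= k, ordered pointwise.\<close>

record 'a kgraph =
  Mor :: "'a set"
  rng :: "'a \<Rightarrow> 'a"
  src :: "'a \<Rightarrow> 'a"
  cmp :: "'a \<Rightarrow> 'a \<Rightarrow> 'a"
  deg :: "'a \<Rightarrow> nat \<Rightarrow> nat"

definition NK :: "nat \<Rightarrow> (nat \<Rightarrow> nat) set" where
  "NK k = {n. \<forall>i\<ge>k. n i = 0}"

definition vertices :: "'a kgraph \<Rightarrow> 'a set" where
  "vertices L = rng L ` Mor L \<union> src L ` Mor L"

definition is_kgraph :: "nat \<Rightarrow> 'a kgraph \<Rightarrow> bool" where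
  "is_kgraph k L \<longleftrightarrow>
     countable (Mor L) \<and>
     (\<forall>l\<in>Mor L. rng L l \<in> Mor L \<and> src L l \<in> Mor L) \<and>
     (\<forall>v\<in>vertices L. rng L v = v \<and> src L v = v) \<and>
     (\<forall>l\<in>Mor L. \<forall>m\<in>Mor L. src L l = rng L m \<longrightarrow>
        cmp L l m \<in> Mor L \<and> rng L (cmp L l m) = rng L l \<and> src L (cmp L l m) = src L m) \<and>
     (\<forall>l\<in>Mor L. cmp L (rng L l) l = l \<and> cmp L l (src L l) = l) \<and>
     (\<forall>l\<in>Mor L. \<forall>m\<in>Mor L. \<forall>n\<in>Mor L. src L l = rng L m \<longrightarrow> src L m = rng L n \<longrightarrow>
        cmp L (cmp L l m) n = cmp L l (cmp L m n)) \<and>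
     (\<forall>l\<in>Mor L. deg L l \<in> NK k) \<and>
     (\<forall>l\<in>Mor L. \<forall>m\<in>Mor L. src L l = rng L m \<longrightarrow>
        deg L (cmp L l m) = (\<lambda>i. deg L l i + deg L m i)) \<and>
     (\<forall>l\<in>Mor L. \<forall>m n. deg L l = (\<lambda>i. m i + n i) \<longrightarrow>
        (\<exists>!p. fst p \<in> Mor L \<and> snd p \<in> Mor L \<and> src L (fst p) = rng L (snd p) \<and>
              cmp L (fst p) (snd p) = l \<and> deg L (fst p) = m \<and> deg L (snd p) = n))"

definition vLn :: "'a kgraph \<Rightarrow> 'a \<Rightarrow> (nat \<Rightarrow> nat) \<Rightarrow> 'a set" where
  "vLn L v n = {l \<in> Mor L. rng L l = v \<and> deg L l = n}"

definition row_finite :: "nat \<Rightarrow> 'a kgraph \<Rightarrow> bool" where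
  "row_finite k L \<longleftrightarrow> (\<forall>v\<in>vertices L. \<forall>n\<in>NK k. finite (vLn L v n))"

definition no_sources :: "nat \<Rightarrow> 'a kgraph \<Rightarrow> bool" where
  "no_sources k L \<longleftrightarrow> (\<forall>v\<in>vertices L. \<forall>n\<in>NK k. vLn L v n \<noteq> {})"

definition extensions :: "'a kgraph \<Rightarrow> 'a \<Rightarrow> 'a set" where
  "extensions L l = {cmp L l a | a. a \<in> Mor L \<and> src L l = rng L a}"

definition MCE :: "'a kgraph \<Rightarrow> 'a \<Rightarrow> 'a \<Rightarrow> 'a set" where
  "MCE L m n = {l \<in> Mor L. deg L l = (\<lambda>i. max (deg L m i) (deg L n i)) \<and>
      (\<exists>a\<in>Mor L. src L m = rng L a \<and> l = cmp L m a) \<and>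
      (\<exists>b\<in>Mor L. src L n = rng L b \<and> l = cmp L n b)}"

definition is_filter :: "'a kgraph \<Rightarrow> 'a set \<Rightarrow> bool" where
  "is_filter L S \<longleftrightarrow> S \<subseteq> Mor L \<and> S \<noteq> {} \<and>
     (\<forall>l\<in>Mor L. extensions L l \<inter> S \<noteq> {} \<longrightarrow> l \<in> S) \<and>
     (\<forall>m\<in>S. \<forall>n\<in>S. MCE L m n \<inter> S \<noteq> {})"

definition is_ultrafilter :: "nat \<Rightarrow> 'a kgraph \<Rightarrow> 'a set \<Rightarrow> bool" where
  "is_ultrafilter k L S \<longleftrightarrow> is_filter L S \<and>
     (\<forall>n\<in>NK k. S \<inter> {l \<in> Mor L. deg L l = n} \<noteq> {})"

definition rS :: "'a kgraph \<Rightarrow> 'a set \<Rightarrow> 'a" where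
  "rS L S = (THE v. v \<in> S \<and> v \<in> vertices L)"

definition ell :: "'a kgraph \<Rightarrow> 'a \<Rightarrow> 'a set \<Rightarrow> 'a set" where
  "ell L m S = {e \<in> Mor L. extensions L e \<inter> (cmp L m ` S) \<noteq> {}}"

definition sim :: "nat \<Rightarrow> 'a kgraph \<Rightarrow> 'a \<Rightarrow> 'a \<Rightarrow> bool" where
  "sim k L m n \<longleftrightarrow> (\<forall>S. is_ultrafilter k L S \<and> rS L S = src L m \<longrightarrow> ell L m S = ell L n S)"

end

theory Submission
  imports Defs
begin

locale kg =
  fixes k :: nat and L :: "'a kgraph"
  assumes kg: "is_kgraph k L"
begin

lemma K0: "countable (Mor L)" and K1: "\<forall>l\<in>Mor L. rng L l \<in> Mor L \<and> src L l \<in> Mor L"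
  and K2: "\<forall>v\<in>vertices L. rng L v = v \<and> src L v = v"
  and K3: "\<forall>l\<in>Mor L. \<forall>m\<in>Mor L. src L l = rng L m \<longrightarrow>
        cmp L l m \<in> Mor L \<and> rng L (cmp L l m) = rng L l \<and> src L (cmp L l m) = src L m"
  and K4: "\<forall>l\<in>Mor L. cmp L (rng L l) l = l \<and> cmp L l (src L l) = l"
  and K5: "\<forall>l\<in>Mor L. \<forall>m\<in>Mor L. \<forall>n\<in>Mor L. src L l = rng L m \<longrightarrow> src L m = rng L n \<longrightarrow>
        cmp L (cmp L l m) n = cmp L l (cmp L m n)"
  and K6: "\<forall>l\<in>Mor L. deg L l \<in> NK k"
  and K7: "\<forall>l\<in>Mor L. \<forall>m\<in>Mor L. src L l = rng L m \<longrightarrow>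
        deg L (cmp L l m) = (\<lambda>i. deg L l i + deg L m i)"
  and K8: "\<forall>l\<in>Mor L. \<forall>m n. deg L l = (\<lambda>i. m i + n i) \<longrightarrow>
        (\<exists>!p. fst p \<in> Mor L \<and> snd p \<in> Mor L \<and> src L (fst p) = rng L (snd p) \<and>
              cmp L (fst p) (snd p) = l \<and> deg L (fst p) = m \<and> deg L (snd p) = n)"
  using kg unfolding is_kgraph_def by simp_all

lemma mor_rng: "l \<in> Mor L \<Longrightarrow> rng L l \<in> Mor L" using K1 by blast
lemma mor_src: "l \<in> Mor L \<Longrightarrow> src L l \<in> Mor L" using K1 by blast
lemma vert_rng: "v \<in> vertices L \<Longrightarrow> rng L v = v" using K2 by blast
lemma vert_src: "v \<in> vertices L \<Longrightarrow> src L v = v" using K2 by blast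
lemma rng_vert: "l \<in> Mor L \<Longrightarrow> rng L l \<in> vertices L" unfolding vertices_def by blast
lemma src_vert: "l \<in> Mor L \<Longrightarrow> src L l \<in> vertices L" unfolding vertices_def by blast
lemma rng_rng: "l \<in> Mor L \<Longrightarrow> rng L (rng L l) = rng L l" by (simp add: rng_vert vert_rng)
lemma src_rng: "l \<in> Mor L \<Longrightarrow> src L (rng L l) = rng L l" by (simp add: rng_vert vert_src)
lemma rng_src: "l \<in> Mor L \<Longrightarrow> rng L (src L l) = src L l" by (simp add: src_vert vert_rng)
lemma cmp_mor: "l \<in> Mor L \<Longrightarrow> m \<in> Mor L \<Longrightarrow> src L l = rng L m \<Longrightarrow> cmp L l m \<in> Mor L"
  using K3 by blast
lemma cmp_rng: "l \<in> Mor L \<Longrightarrow> m \<in> Mor L \<Longrightarrow> src L l = rng L m \<Longrightarrow> rng L (cmp L l m) = rng L l"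
  using K3 by blast
lemma cmp_src: "l \<in> Mor L \<Longrightarrow> m \<in> Mor L \<Longrightarrow> src L l = rng L m \<Longrightarrow> src L (cmp L l m) = src L m"
  using K3 by blast
lemma cmp_rid: "l \<in> Mor L \<Longrightarrow> cmp L l (src L l) = l" using K4 by blast
lemma cmp_lid: "l \<in> Mor L \<Longrightarrow> cmp L (rng L l) l = l" using K4 by blast
lemma assoc: "l \<in> Mor L \<Longrightarrow> m \<in> Mor L \<Longrightarrow> n \<in> Mor L \<Longrightarrow> src L l = rng L m \<Longrightarrow> src L m = rng L n \<Longrightarrow>
        cmp L (cmp L l m) n = cmp L l (cmp L m n)"
  using K5 by blast
lemma deg_cmp: "l \<in> Mor L \<Longrightarrow> m \<in> Mor L \<Longrightarrow> src L l = rng L m \<Longrightarrow>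
        deg L (cmp L l m) = (\<lambda>i. deg L l i + deg L m i)"
  using K7 by blast
lemma deg_NK: "l \<in> Mor L \<Longrightarrow> deg L l \<in> NK k" using K6 by blast

lemma fact_ex1: "l \<in> Mor L \<Longrightarrow> deg L l = (\<lambda>i. m i + n i) \<Longrightarrow>
        (\<exists>!p. fst p \<in> Mor L \<and> snd p \<in> Mor L \<and> src L (fst p) = rng L (snd p) \<and>
              cmp L (fst p) (snd p) = l \<and> deg L (fst p) = m \<and> deg L (snd p) = n)"
  using K8 by blast

lemma fact_ex: assumes "l \<in> Mor L" "deg L l = (\<lambda>i. m i + n i)"
  shows "\<exists>a b. a \<in> Mor L \<and> b \<in> Mor L \<and> src L a = rng L b \<and> cmp L a b = l \<and> deg L a = m \<and> deg L b = n"
proof -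
  from fact_ex1[OF assms] obtain p where "fst p \<in> Mor L \<and> snd p \<in> Mor L \<and> src L (fst p) = rng L (snd p) \<and>
              cmp L (fst p) (snd p) = l \<and> deg L (fst p) = m \<and> deg L (snd p) = n" by blast
  then show ?thesis by blast
qed

lemma fact_uniq: assumes "l \<in> Mor L" "deg L l = (\<lambda>i. m i + n i)"
  and "a \<in> Mor L" "b \<in> Mor L" "src L a = rng L b" "cmp L a b = l" "deg L a = m" "deg L b = n"
  and "a' \<in> Mor L" "b' \<in> Mor L" "src L a' = rng L b'" "cmp L a' b' = l" "deg L a' = m" "deg L b' = n"
  shows "a = a'"
proof -
  from fact_ex1[OF assms(1,2)] obtain p where
    "\<forall>q. (fst q \<in> Mor L \<and> snd q \<in> Mor L \<and> src L (fst q) = rng L (snd q) \<and>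
              cmp L (fst q) (snd q) = l \<and> deg L (fst q) = m \<and> deg L (snd q) = n) \<longrightarrow> q = p"
    by metis
  then have "(a,b) = p" "(a',b') = p" using assms by auto
  then show ?thesis by auto
qed

definition pref where "pref x y \<longleftrightarrow> x \<in> Mor L \<and> (\<exists>a\<in>Mor L. src L x = rng L a \<and> y = cmp L x a)"

lemma pref_refl: "x \<in> Mor L \<Longrightarrow> pref x x"
  unfolding pref_def using mor_src rng_src cmp_rid by metis

lemma pref_mor: "pref x y \<Longrightarrow> y \<in> Mor L"
  unfolding pref_def using cmp_mor by auto

lemma pref_mor1: "pref x y \<Longrightarrow> x \<in> Mor L"
  unfolding pref_def by auto

lemma pref_rng: "pref x y \<Longrightarrow> rng L y = rng L x"
  unfolding pref_def using cmp_rng by auto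

lemma pref_cmp: "x \<in> Mor L \<Longrightarrow> a \<in> Mor L \<Longrightarrow> src L x = rng L a \<Longrightarrow> pref x (cmp L x a)"
  unfolding pref_def by auto

lemma pref_trans: assumes "pref x y" "pref y z" shows "pref x z"
proof -
  from assms(1) obtain a where a: "x \<in> Mor L" "a \<in> Mor L" "src L x = rng L a" "y = cmp L x a"
    unfolding pref_def by auto
  from assms(2) obtain b where b: "b \<in> Mor L" "src L y = rng L b" "z = cmp L y b"
    unfolding pref_def by auto
  have sa: "src L a = rng L b" using a b cmp_src by auto
  have "z = cmp L x (cmp L a b)" using a b sa assoc by auto
  moreover have "cmp L a b \<in> Mor L" using a b sa cmp_mor by auto
  moreover have "rng L (cmp L a b) = src L x" using a b sa cmp_rng by auto
  ultimately show ?thesis using a unfolding pref_def by (metis cmp_rng)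
qed

lemma pref_deg: "pref x y \<Longrightarrow> deg L x i \<le> deg L y i"
  unfolding pref_def using deg_cmp by auto

lemma pref_factor: assumes "y \<in> Mor L" "\<forall>i. n i \<le> deg L y i"
  shows "\<exists>x. pref x y \<and> deg L x = n"
proof -
  have "deg L y = (\<lambda>i. n i + (deg L y i - n i))" using assms(2) by (auto simp: fun_eq_iff)
  from fact_ex[OF assms(1) this] obtain a b where
    "a \<in> Mor L" "b \<in> Mor L" "src L a = rng L b" "cmp L a b = y" "deg L a = n" by blast
  then show ?thesis unfolding pref_def by metis
qed

lemma pref_uniq: assumes "pref x y" "pref x' y" "deg L x = deg L x'" shows "x = x'"
proof -
  from assms(1) obtain a where a: "x \<in> Mor L" "a \<in> Mor L" "src L x = rng L a" "y = cmp L x a"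
    unfolding pref_def by auto
  from assms(2) obtain b where b: "x' \<in> Mor L" "b \<in> Mor L" "src L x' = rng L b" "y = cmp L x' b"
    unfolding pref_def by auto
  have y: "y \<in> Mor L" using assms pref_mor by auto
  have d1: "deg L y = (\<lambda>i. deg L x i + deg L a i)" using a deg_cmp by auto
  have d2: "deg L y = (\<lambda>i. deg L x' i + deg L b i)" using b deg_cmp by auto
  have db: "deg L b = deg L a" using d1 d2 assms(3) by (auto simp: fun_eq_iff)
  show ?thesis
    by (rule fact_uniq[OF y d1 a(1,2,3) a(4)[symmetric] refl refl b(1,2,3) b(4)[symmetric] assms(3)[symmetric] db])
qed

lemma pref_down: assumes "pref x y" "pref z y" "\<forall>i. deg L z i \<le> deg L x i" shows "pref z x"
proof -
  obtain z' where z': "pref z' x" "deg L z' = deg L z"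
    using pref_factor[of x "deg L z"] assms pref_mor1 by blast
  have "pref z' y" using z' assms pref_trans by blast
  then have "z' = z" using pref_uniq assms z' by blast
  then show ?thesis using z' by simp
qed

lemma common: assumes "pref x y" "pref x' y" shows "\<exists>\<rho>. \<rho> \<in> MCE L x x' \<and> pref \<rho> y"
proof -
  define n where "n = (\<lambda>i. max (deg L x i) (deg L x' i))"
  have "\<forall>i. n i \<le> deg L y i" using assms pref_deg unfolding n_def by auto
  then obtain \<rho> where r: "pref \<rho> y" "deg L \<rho> = n" using pref_factor assms pref_mor by blast
  have "pref x \<rho>" using pref_down[OF r(1) assms(1)] r(2) unfolding n_def by auto
  moreover have "pref x' \<rho>" using pref_down[OF r(1) assms(2)] r(2) unfolding n_def by auto
  ultimately have "\<rho> \<in> MCE L x x'" using r pref_mor1 unfolding MCE_def n_def pref_def by auto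
  then show ?thesis using r by blast
qed

lemma pref_left: assumes "pref \<sigma> \<rho>" "\<mu> \<in> Mor L" "src L \<mu> = rng L \<sigma>"
  shows "pref (cmp L \<mu> \<sigma>) (cmp L \<mu> \<rho>)"
proof -
  from assms(1) obtain a where a: "\<sigma> \<in> Mor L" "a \<in> Mor L" "src L \<sigma> = rng L a" "\<rho> = cmp L \<sigma> a"
    unfolding pref_def by auto
  have "cmp L \<mu> \<rho> = cmp L (cmp L \<mu> \<sigma>) a" using a assms assoc by auto
  moreover have "src L (cmp L \<mu> \<sigma>) = rng L a" using a assms cmp_src by auto
  moreover have "cmp L \<mu> \<sigma> \<in> Mor L" using a assms cmp_mor by auto
  ultimately show ?thesis using a unfolding pref_def by auto
qed

lemma filt_rng: assumes "is_filter L S" "l \<in> S" shows "rng L l \<in> S"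
proof -
  have l: "l \<in> Mor L" using assms unfolding is_filter_def by auto
  have "l \<in> extensions L (rng L l)" unfolding extensions_def
    using l src_rng cmp_lid by force
  then show ?thesis using assms l mor_rng unfolding is_filter_def by blast
qed

lemma filt_rS: assumes "is_filter L S" "l \<in> S" shows "rS L S = rng L l"
  unfolding rS_def
proof (rule the_equality)
  have l: "l \<in> Mor L" using assms unfolding is_filter_def by auto
  show "rng L l \<in> S \<and> rng L l \<in> vertices L" using filt_rng[OF assms] rng_vert l by auto
  fix v assume v: "v \<in> S \<and> v \<in> vertices L"
  have "MCE L v (rng L l) \<inter> S \<noteq> {}" using assms v filt_rng unfolding is_filter_def by blast
  then obtain x where x: "x \<in> MCE L v (rng L l)" by blast
  have vm: "v \<in> Mor L" using v assms unfolding is_filter_def by auto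
  from x obtain a where "a \<in> Mor L" "src L v = rng L a" "x = cmp L v a" unfolding MCE_def by auto
  then have "rng L x = v" using vm cmp_rng vert_rng v by auto
  moreover from x obtain b where "b \<in> Mor L" "src L (rng L l) = rng L b" "x = cmp L (rng L l) b"
    unfolding MCE_def by auto
  then have "rng L x = rng L l" using l mor_rng cmp_rng rng_rng by auto
  ultimately show "v = rng L l" by simp
qed

lemma ell_iff: "e \<in> ell L m S \<longleftrightarrow> (\<exists>\<sigma>\<in>S. pref e (cmp L m \<sigma>))"
proof
  assume "e \<in> ell L m S"
  then have e: "e \<in> Mor L" "extensions L e \<inter> (cmp L m ` S) \<noteq> {}" unfolding ell_def by auto
  then obtain a \<sigma> where "a \<in> Mor L" "src L e = rng L a" "\<sigma> \<in> S" "cmp L e a = cmp L m \<sigma>"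
    unfolding extensions_def by blast
  then show "\<exists>\<sigma>\<in>S. pref e (cmp L m \<sigma>)" using e unfolding pref_def by metis
next
  assume "\<exists>\<sigma>\<in>S. pref e (cmp L m \<sigma>)"
  then obtain a \<sigma> where "e \<in> Mor L" "a \<in> Mor L" "src L e = rng L a" "\<sigma> \<in> S" "cmp L e a = cmp L m \<sigma>"
    unfolding pref_def by metis
  then show "e \<in> ell L m S" unfolding ell_def extensions_def by blast
qed

lemma ell_sub:
  assumes U: "is_ultrafilter k L S" and rS: "rS L S = src L \<mu>"
    and m: "\<mu> \<in> Mor L" "\<nu> \<in> Mor L" "src L \<mu> = src L \<nu>"
    and H: "\<forall>\<tau>\<in>Mor L. rng L \<tau> = src L \<mu> \<longrightarrow> MCE L (cmp L \<mu> \<tau>) (cmp L \<nu> \<tau>) \<noteq> {}"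
  shows "ell L \<mu> S \<subseteq> ell L \<nu> S"
proof
  fix \<eta> assume "\<eta> \<in> ell L \<mu> S"
  then obtain \<sigma> where s: "\<sigma> \<in> S" "pref \<eta> (cmp L \<mu> \<sigma>)" using ell_iff by blast
  have F: "is_filter L S" using U unfolding is_ultrafilter_def by auto
  have SM: "S \<subseteq> Mor L" using F unfolding is_filter_def by auto
  have rs: "rng L \<sigma> = src L \<mu>" using filt_rS[OF F s(1)] rS by simp
  have em: "\<eta> \<in> Mor L" using s pref_mor1 by auto
  define n where "n = (\<lambda>i. max (deg L \<sigma> i) (deg L \<eta> i))"
  have "n \<in> NK k" using deg_NK[of \<sigma>] deg_NK[OF em] s SM unfolding NK_def n_def by auto
  then obtain \<tau>0 where t: "\<tau>0 \<in> S" "deg L \<tau>0 = n" using U unfolding is_ultrafilter_def by blast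
  obtain \<rho> where r: "\<rho> \<in> MCE L \<sigma> \<tau>0" "\<rho> \<in> S" using F s t unfolding is_filter_def by blast
  have dr: "deg L \<rho> = n" using r(1) t(2) unfolding MCE_def n_def by (auto simp: fun_eq_iff)
  have ps: "pref \<sigma> \<rho>" using r(1) unfolding MCE_def pref_def using s SM by auto
  have rr: "rng L \<rho> = src L \<mu>" using filt_rS[OF F r(2)] rS by simp
  have rho: "\<rho> \<in> Mor L" using r SM by auto
  obtain lam where lam: "lam \<in> MCE L (cmp L \<mu> \<rho>) (cmp L \<nu> \<rho>)" using H rho rr by blast
  have cm: "cmp L \<mu> \<rho> \<in> Mor L" "cmp L \<nu> \<rho> \<in> Mor L" using m rho rr cmp_mor by auto
  have p1: "pref (cmp L \<mu> \<rho>) lam" "pref (cmp L \<nu> \<rho>) lam"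
    using lam cm unfolding MCE_def pref_def by auto
  have "pref (cmp L \<mu> \<sigma>) (cmp L \<mu> \<rho>)" using pref_left[OF ps m(1)] rs by simp
  then have pe: "pref \<eta> lam" using s(2) p1 pref_trans by blast
  have "\<forall>i. deg L \<eta> i \<le> deg L (cmp L \<nu> \<rho>) i"
    using deg_cmp[of \<nu> \<rho>] m rho rr dr unfolding n_def by auto
  then have "pref \<eta> (cmp L \<nu> \<rho>)" using pref_down[OF p1(2) pe] by simp
  then show "\<eta> \<in> ell L \<nu> S" using r(2) ell_iff by blast
qed

lemma exists_uf: assumes ns: "no_sources k L" and t: "\<tau> \<in> Mor L"
  shows "\<exists>S. is_ultrafilter k L S \<and> \<tau> \<in> S"
proof -
  define e :: "nat \<Rightarrow> nat" where "e = (\<lambda>i. if i < k then 1 else 0)"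
  define step where "step = (\<lambda>x. SOME \<beta>. \<beta> \<in> vLn L (src L x) e)"
  define lam where "lam = rec_nat \<tau> (\<lambda>j x. cmp L x (step x))"
  have lam0: "lam 0 = \<tau>" and lamS: "\<And>j. lam (Suc j) = cmp L (lam j) (step (lam j))"
    by (simp_all add: lam_def)
  have eNK: "e \<in> NK k" unfolding NK_def e_def by auto
  have step_ok: "step x \<in> Mor L \<and> rng L (step x) = src L x \<and> deg L (step x) = e" if x: "x \<in> Mor L" for x
  proof -
    have "vLn L (src L x) e \<noteq> {}" using ns eNK src_vert[OF x] unfolding no_sources_def by blast
    then have "step x \<in> vLn L (src L x) e" unfolding step_def by (metis ex_in_conv someI_ex)
    then show ?thesis unfolding vLn_def by auto
  qed
  have lam_ok: "lam j \<in> Mor L \<and> deg L (lam j) = (\<lambda>i. deg L \<tau> i + (if i < k then j else 0))" for j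
  proof (induction j)
    case 0 then show ?case using t lam0 by simp
  next
    case (Suc j)
    then have so: "step (lam j) \<in> Mor L" "rng L (step (lam j)) = src L (lam j)" "deg L (step (lam j)) = e"
      using step_ok by auto
    show ?case using Suc so lamS[of j] cmp_mor deg_cmp[of "lam j" "step (lam j)"]
      by (auto simp: e_def fun_eq_iff)
  qed
  have pref_lam: "i \<le> j \<Longrightarrow> pref (lam i) (lam j)" for i j
  proof (induction j rule: dec_induct)
    case base then show ?case using lam_ok pref_refl by auto
  next
    case (step j)
    have "pref (lam j) (lam (Suc j))" using lamS[of j] pref_cmp lam_ok step_ok by metis
    then show ?case using step pref_trans by blast
  qed
  define S where "S = {x. \<exists>j. pref x (lam j)}"
  have F: "is_filter L S" unfolding is_filter_def
  proof (intro conjI ballI impI)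
    show "S \<subseteq> Mor L" unfolding S_def using pref_mor1 by auto
    have "pref \<tau> (lam 0)" using pref_refl[OF t] lam0 by simp
    then show "S \<noteq> {}" unfolding S_def by blast
  next
    fix l assume l: "l \<in> Mor L" "extensions L l \<inter> S \<noteq> {}"
    then obtain a j where "a \<in> Mor L" "src L l = rng L a" "pref (cmp L l a) (lam j)"
      unfolding extensions_def S_def by blast
    then have "pref l (lam j)" using pref_trans[OF pref_cmp[OF l(1)]] by blast
    then show "l \<in> S" unfolding S_def by blast
  next
    fix m n assume "m \<in> S" "n \<in> S"
    then obtain i j where ij: "pref m (lam i)" "pref n (lam j)" unfolding S_def by blast
    then have "pref m (lam (max i j))" "pref n (lam (max i j))" using pref_lam pref_trans
      by (metis max.cobounded1 max.cobounded2)+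
    then obtain \<rho> where "\<rho> \<in> MCE L m n" "pref \<rho> (lam (max i j))" using common by blast
    then show "MCE L m n \<inter> S \<noteq> {}" unfolding S_def by blast
  qed
  have "S \<inter> {l \<in> Mor L. deg L l = n} \<noteq> {}" if n: "n \<in> NK k" for n
  proof -
    define j where "j = (\<Sum>i<k. n i)"
    have "\<forall>i. n i \<le> deg L (lam j) i"
    proof
      fix i
      show "n i \<le> deg L (lam j) i"
      proof (cases "i < k")
        case True
        have "n i \<le> j" unfolding j_def using True by (intro member_le_sum) auto
        moreover have "deg L (lam j) i = deg L \<tau> i + j" using lam_ok[of j] True by simp
        ultimately show ?thesis by simp
      next
        case False then show ?thesis using n unfolding NK_def by auto
      qed
    qed
    then obtain x where "pref x (lam j)" "deg L x = n" using pref_factor[OF conjunct1[OF lam_ok[of j]]] by blast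
    then show ?thesis unfolding S_def using pref_mor1 by blast
  qed
  then have "is_ultrafilter k L S" using F unfolding is_ultrafilter_def by blast
  moreover have "pref \<tau> (lam 0)" using pref_refl[OF t] lam0 by simp
  then have "\<tau> \<in> S" unfolding S_def by blast
  ultimately show ?thesis by blast
qed

lemma fwd:
  assumes ns: "no_sources k L" and m: "\<mu> \<in> Mor L" "\<nu> \<in> Mor L" "src L \<mu> = src L \<nu>"
    and sim: "sim k L \<mu> \<nu>" and t: "\<tau> \<in> Mor L" "rng L \<tau> = src L \<mu>"
  shows "MCE L (cmp L \<mu> \<tau>) (cmp L \<nu> \<tau>) \<noteq> {}"
proof -
  obtain S where U: "is_ultrafilter k L S" "\<tau> \<in> S" using exists_uf[OF ns t(1)] by blast
  have F: "is_filter L S" using U unfolding is_ultrafilter_def by auto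
  have SM: "S \<subseteq> Mor L" using F unfolding is_filter_def by auto
  have rS: "rS L S = src L \<mu>" using filt_rS[OF F U(2)] t by simp
  have eq: "ell L \<mu> S = ell L \<nu> S" using sim U rS unfolding sim_def by blast
  have "cmp L \<mu> \<tau> \<in> Mor L" using m t cmp_mor by auto
  then have "cmp L \<mu> \<tau> \<in> ell L \<mu> S" using ell_iff pref_refl U(2) by blast
  then obtain \<sigma> where s: "\<sigma> \<in> S" "pref (cmp L \<mu> \<tau>) (cmp L \<nu> \<sigma>)" using eq ell_iff by blast
  have rs: "rng L \<sigma> = src L \<nu>" using filt_rS[OF F s(1)] rS m by simp
  obtain \<rho> where r: "\<rho> \<in> MCE L \<sigma> \<tau>" using F s U unfolding is_filter_def by blast
  have "pref \<sigma> \<rho>" "pref \<tau> \<rho>" using r s U SM unfolding MCE_def pref_def by auto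
  then have "pref (cmp L \<nu> \<sigma>) (cmp L \<nu> \<rho>)" "pref (cmp L \<nu> \<tau>) (cmp L \<nu> \<rho>)"
    using pref_left m rs t by auto
  then have "pref (cmp L \<mu> \<tau>) (cmp L \<nu> \<rho>)" using s pref_trans by blast
  then show ?thesis using common \<open>pref (cmp L \<nu> \<tau>) (cmp L \<nu> \<rho>)\<close> by blast
qed

end

lemma MCE_sym: "MCE L m n = MCE L n m"
proof -
  have "(\<lambda>i. max (deg L m i) (deg L n i)) = (\<lambda>i. max (deg L n i) (deg L m i))"
    by (simp add: max.commute)
  then show ?thesis unfolding MCE_def by (simp only:) blast
qed

theorem mainTheorem20:
  assumes "is_kgraph k L" and "row_finite k L" and "no_sources k L"
    and "\<mu> \<in> Mor L" and "\<nu> \<in> Mor L" and "src L \<mu> = src L \<nu>"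
  shows "sim k L \<mu> \<nu> \<longleftrightarrow>
    (\<forall>\<tau>\<in>Mor L. rng L \<tau> = src L \<mu> \<longrightarrow> MCE L (cmp L \<mu> \<tau>) (cmp L \<nu> \<tau>) \<noteq> {})"
proof
  interpret kg k L using assms(1) by unfold_locales
  show "sim k L \<mu> \<nu> \<Longrightarrow> (\<forall>\<tau>\<in>Mor L. rng L \<tau> = src L \<mu> \<longrightarrow> MCE L (cmp L \<mu> \<tau>) (cmp L \<nu> \<tau>) \<noteq> {})"
    using fwd[OF assms(3,4,5,6)] by blast
  assume H: "\<forall>\<tau>\<in>Mor L. rng L \<tau> = src L \<mu> \<longrightarrow> MCE L (cmp L \<mu> \<tau>) (cmp L \<nu> \<tau>) \<noteq> {}"
  have H': "\<forall>\<tau>\<in>Mor L. rng L \<tau> = src L \<nu> \<longrightarrow> MCE L (cmp L \<nu> \<tau>) (cmp L \<mu> \<tau>) \<noteq> {}"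
    using H assms(6) MCE_sym by metis
  show "sim k L \<mu> \<nu>" unfolding sim_def
  proof (intro allI impI)
    fix S assume S: "is_ultrafilter k L S \<and> rS L S = src L \<mu>"
    show "ell L \<mu> S = ell L \<nu> S"
    proof
      show "ell L \<mu> S \<subseteq> ell L \<nu> S" using S H assms(4,5,6) by (intro ell_sub) auto
      show "ell L \<nu> S \<subseteq> ell L \<mu> S" using S H' assms(4,5,6) by (intro ell_sub) auto
    qed
  qed
qed

end
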